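(* Let $0<\varepsilon\le 1/15$, $m\ge 3$, $p=1/m$, and $i\in[n]$. Suppose $\mathcal{A},\mathcal{B}\subset[m]^n$ are cross-intersecting with $\mu(\mathcal{A}),\mu(\mathcal{B})\ge(1-\varepsilon)p$ and $T_i(\mathcal{A}),T_i(\mathcal{B})\subset D_{i\to 1}$. Then there is $j\in[m]$ such that $\mu(\mathcal{A}\cap D_{i\to j})\ge(1-3\varepsilon)p$ and $\mu(\mathcal{B}\cap D_{i\to j})\ge(1-3\varepsilon)p$.
   Context: $\mu$ is the uniform probability measure on $[m]^n$. $\mathcal{A},\mathcal{B}$ are cross-intersecting if for every $x\in\mathcal{A}$, $y\in\mathcal{B}$ there is $k$ with $x_k=y_k$. $D_{i\to j}=\{x\in[m]^n:x_i=j\}$. For $i\in[n]$, $j\in[m]$, the map $T_{i,j}:[m]^n\to[m]^n$ sends $x$ to $y$ with $y_r=x_r$ for $r\ne i$, $y_i=1$ if $x_i=j$ and $y_i=x_i$ otherwise; on families, $T_{i,j}(\mathcal{F})=\{x: T_{i,j}(x)\in\mathcal{F}\}\cup\{T_{i,j}(x):x\in\mathcal{F}\}$. Finally $T_i=T_{i,2}\circ T_{i,3}\circ\cdots\circ T_{i,m}$ (applied to families). *)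

theory Defs
  imports Complex_Main "HOL-Library.FuncSet"
begin

definition cube :: "nat \<Rightarrow> nat \<Rightarrow> (nat \<Rightarrow> nat) set" where
  "cube m n = PiE {1..n} (\<lambda>_. {1..m})"

definition mu :: "nat \<Rightarrow> nat \<Rightarrow> (nat \<Rightarrow> nat) set \<Rightarrow> real" where
  "mu m n F = real (card (F \<inter> cube m n)) / real m ^ n"

definition cross_intersecting :: "nat \<Rightarrow> (nat \<Rightarrow> nat) set \<Rightarrow> (nat \<Rightarrow> nat) set \<Rightarrow> bool" where
  "cross_intersecting n A B \<longleftrightarrow> (\<forall>x\<in>A. \<forall>y\<in>B. \<exists>k\<in>{1..n}. x k = y k)"

definition dict :: "nat \<Rightarrow> nat \<Rightarrow> nat \<Rightarrow> nat \<Rightarrow> (nat \<Rightarrow> nat) set" where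
  "dict m n i j = {x \<in> cube m n. x i = j}"

definition Tpt :: "nat \<Rightarrow> nat \<Rightarrow> (nat \<Rightarrow> nat) \<Rightarrow> (nat \<Rightarrow> nat)" where
  "Tpt i j x = x(i := (if x i = j then 1 else x i))"

definition Tfam :: "nat \<Rightarrow> nat \<Rightarrow> (nat \<Rightarrow> nat) set \<Rightarrow> (nat \<Rightarrow> nat) set" where
  "Tfam i j F = {x \<in> F. Tpt i j x \<in> F} \<union> Tpt i j ` F"

fun Tupto :: "nat \<Rightarrow> nat \<Rightarrow> (nat \<Rightarrow> nat) set \<Rightarrow> (nat \<Rightarrow> nat) set" where
  "Tupto i k F = (if k < 2 then F else Tupto i (k - 1) (Tfam i k F))"

definition Ti :: "nat \<Rightarrow> nat \<Rightarrow> (nat \<Rightarrow> nat) set \<Rightarrow> (nat \<Rightarrow> nat) set" where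
  "Ti m i F = Tupto i m F"

end

theory Submission
  imports Defs
begin

lemma poly_ineq:
  fixes x y M :: real
  assumes "0 \<le> y" "y \<le> x" "x \<le> 1" "M \<ge> 3"
  shows "((1-y)*(1+3*x) + (M-1)*(1-x)*(1+3*y)) * (M + 3*x + 3*(M-1)*y)
         \<le> M*(1+3*x)*(1+3*y)*(M - x - (M-1)*y)"
proof -
  have id: "M*(1+3*x)*(1+3*y)*(M - x - (M-1)*y) - ((1-y)*(1+3*x) + (M-1)*(1-x)*(1+3*y)) * (M + 3*x + 3*(M-1)*y)
     = (x-y)*(4*M*(M-2)*(1+3*y) - 12*(x-y))"
    by (simp add: algebra_simps)
  have "M*(M-2) \<ge> 3*1" using assms(4) by (intro mult_mono) auto
  then have "(4*(M*(M-2)))*(1+3*y) \<ge> 12*(1+3*y)" using assms(1)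
    by (intro mult_right_mono) auto
  then have "4*M*(M-2)*(1+3*y) \<ge> 12*(1+3*y)" by (simp add: algebra_simps)
  moreover have "12*(x-y) \<le> 12*(1+3*y)" using assms(1,2,3) by (simp add: algebra_simps)
  ultimately have "12*(x-y) \<le> 4*M*(M-2)*(1+3*y)" by (rule_tac order_trans) auto
  then have "4*M*(M-2)*(1+3*y) - 12*(x-y) \<ge> 0" by simp
  then have "(x-y)*(4*M*(M-2)*(1+3*y) - 12*(x-y)) \<ge> 0" using assms by simp
  then show ?thesis using id by linarith
qed


lemma step_ineq:
  fixes f g :: "nat \<Rightarrow> real" and m :: nat
  assumes m3: "m \<ge> 3" and f0: "\<forall>c\<in>{1..m}. 0 \<le> f c" and g0: "\<forall>c\<in>{1..m}. 0 \<le> g c"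
    and cons: "\<forall>c\<in>{1..m}. \<forall>d\<in>{1..m}. c \<noteq> d \<longrightarrow> f c + g d + 3 * f c * g d \<le> 1"
    and poly: "\<And>x y M :: real. 0 \<le> y \<Longrightarrow> y \<le> x \<Longrightarrow> x \<le> 1 \<Longrightarrow> M \<ge> 3 \<Longrightarrow>
       ((1-y)*(1+3*x) + (M-1)*(1-x)*(1+3*y)) * (M + 3*x + 3*(M-1)*y)
         \<le> M*(1+3*x)*(1+3*y)*(M - x - (M-1)*y)"
  shows "(\<Sum>c=1..m. f c)/m + (\<Sum>c=1..m. g c)/m + 3 * ((\<Sum>c=1..m. f c)/m) * ((\<Sum>c=1..m. g c)/m) \<le> 1"
proof -
  define K where "K = {1..m}"
  have fK: "finite K" and neK: "K \<noteq> {}" using m3 by (auto simp: K_def)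
  define x where "x = Max (g ` K)"
  have "x \<in> g ` K" unfolding x_def using fK neK by (intro Max_in) auto
  then obtain p where pK: "p \<in> K" and gp: "g p = x" by auto
  have gx: "\<forall>c\<in>K. g c \<le> x" unfolding x_def using fK by auto
  define K' where "K' = K - {p}"
  have cK': "card K' = m - 1" using pK unfolding K'_def K_def by simp
  have fK': "finite K'" using fK unfolding K'_def by auto
  have neK': "K' \<noteq> {}" using cK' m3 by (metis card.empty diff_is_0_eq le_trans nat_le_linear not_one_le_zero numeral_le_one_iff semiring_norm(70) One_nat_def)
  define y where "y = Max (g ` K')"
  have "y \<in> g ` K'" unfolding y_def using fK' neK' by (intro Max_in) auto
  then obtain q where qK: "q \<in> K'" and gq: "g q = y" by auto
  have gy: "\<forall>c\<in>K'. g c \<le> y" unfolding y_def using fK' by auto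
  have qp: "q \<noteq> p" "q \<in> K" using qK unfolding K'_def by auto
  have y0: "0 \<le> y" using gq g0 qp unfolding K_def by auto
  have yx: "y \<le> x" using gx qp gq by auto
  have x1: "x \<le> 1"
  proof -
    have "f q + g p + 3 * f q * g p \<le> 1" using cons qp pK unfolding K_def by auto
    moreover have "0 \<le> f q" "0 \<le> g p" using f0 g0 qp pK unfolding K_def by auto
    ultimately show ?thesis using gp by (smt (verit) mult_nonneg_nonneg)
  qed
  define SF where "SF = (\<Sum>c\<in>K. f c)"
  define SG where "SG = (\<Sum>c\<in>K. g c)"
  define M where "M = real m"
  have M3: "M \<ge> 3" using m3 unfolding M_def by simp
  have SFd: "SF = f p + (\<Sum>c\<in>K'. f c)" unfolding SF_def K'_def
    using fK pK by (simp add: sum.remove)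
  have SGd: "SG = g p + (\<Sum>c\<in>K'. g c)" unfolding SG_def K'_def
    using fK pK by (simp add: sum.remove)
  have "(\<Sum>c\<in>K'. g c) \<le> (\<Sum>c\<in>K'. y)" using gy by (intro sum_mono) auto
  also have "\<dots> = (M-1)*y" using cK' m3 unfolding M_def by (simp add: of_nat_diff)
  finally have SGle: "SG \<le> x + (M-1)*y" using SGd gp by linarith
  have SG0: "0 \<le> SG" unfolding SG_def K_def using g0 by (intro sum_nonneg) auto
  have SF0: "0 \<le> SF" unfolding SF_def K_def using f0 by (intro sum_nonneg) auto
  have fc: "f c * (1+3*x) \<le> 1 - x" if "c \<in> K'" for c
    using cons that pK gp unfolding K'_def K_def by (auto simp: algebra_simps)
  have "(\<Sum>c\<in>K'. f c) * (1+3*x) = (\<Sum>c\<in>K'. f c * (1+3*x))" by (simp add: sum_distrib_right)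
  also have "\<dots> \<le> (\<Sum>c\<in>K'. (1 - x))" using fc by (intro sum_mono) auto
  also have "\<dots> = (M-1)*(1-x)" using cK' m3 unfolding M_def by (simp add: of_nat_diff)
  finally have SF'le: "(\<Sum>c\<in>K'. f c) * (1+3*x) \<le> (M-1)*(1-x)" .
  have fp: "f p * (1+3*y) \<le> 1 - y"
    using cons qp pK gq unfolding K_def by (auto simp: algebra_simps)
  define P where "P = 1 + 3*x"
  define Q where "Q = 1 + 3*y"
  have P0: "P > 0" "Q > 0" using y0 yx unfolding P_def Q_def by auto
  have "SF * P * Q = f p * Q * P + (\<Sum>c\<in>K'. f c) * P * Q" using SFd by (simp add: algebra_simps)
  also have "\<dots> \<le> (1-y) * P + (M-1)*(1-x) * Q"
    using fp SF'le P0 unfolding P_def Q_def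
    by (intro add_mono mult_right_mono) auto
  finally have SFPQ: "SF * P * Q \<le> (1-y) * P + (M-1)*(1-x) * Q" .
  define Gm where "Gm = x + (M-1)*y"
  have Gm0: "M + 3*Gm \<ge> 0" using M3 y0 yx unfolding Gm_def by simp
  have "SF * (M + 3*Gm) * (P*Q) = (SF*P*Q) * (M + 3*Gm)" by (simp add: algebra_simps)
  also have "\<dots> \<le> ((1-y) * P + (M-1)*(1-x) * Q) * (M + 3*Gm)"
    using SFPQ Gm0 by (rule mult_right_mono)
  also have "\<dots> \<le> M*P*Q*(M - Gm)"
    using poly[OF y0 yx x1 M3] unfolding P_def Q_def Gm_def by (simp add: algebra_simps)
  finally have "SF * (M + 3*Gm) * (P*Q) \<le> (M*(M - Gm)) * (P*Q)" by (simp add: algebra_simps)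
  then have main: "SF * (M + 3*Gm) \<le> M*(M - Gm)" using P0
    by (simp add: mult_le_cancel_right)
  have "M*SF + M*SG + 3*SF*SG \<le> M*SF + M*Gm + 3*SF*Gm"
  proof -
    have "(M + 3*SF) * SG \<le> (M + 3*SF) * Gm" using SGle SF0 M3 unfolding Gm_def
      by (intro mult_left_mono) auto
    then show ?thesis by (simp add: algebra_simps)
  qed
  also have "\<dots> \<le> M*M" using main by (simp add: algebra_simps)
  finally have fin: "M*SF + M*SG + 3*SF*SG \<le> M*M" .
  have "SF/M + SG/M + 3*(SF/M)*(SG/M) = (M*SF + M*SG + 3*SF*SG)/(M*M)"
    using M3 by (simp add: field_simps)
  also have "\<dots> \<le> 1" using fin M3 by simp
  finally show ?thesis unfolding SF_def SG_def K_def M_def .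
qed




definition cubeI :: "nat \<Rightarrow> nat set \<Rightarrow> (nat \<Rightarrow> nat) set" where
  "cubeI m I = PiE I (\<lambda>_. {1..m})"
definition xint :: "nat set \<Rightarrow> (nat \<Rightarrow> nat) set \<Rightarrow> (nat \<Rightarrow> nat) set \<Rightarrow> bool" where
  "xint I F G \<longleftrightarrow> (\<forall>x\<in>F. \<forall>y\<in>G. \<exists>k\<in>I. x k = y k)"

lemma card_fibers:
  assumes "F \<subseteq> cubeI m (insert a I)" "finite I"
  shows "card F = (\<Sum>c=1..m. card {x\<in>F. x a = c})"
proof -
  have fin: "finite F" using assms finite_subset[OF assms(1)] unfolding cubeI_def
    by (simp add: finite_PiE)
  have "F = (\<Union>c\<in>{1..m}. {x\<in>F. x a = c})" using assms(1) unfolding cubeI_def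
    by (auto simp: PiE_iff)
  then have "card F = card (\<Union>c\<in>{1..m}. {x\<in>F. x a = c})" by simp
  also have "\<dots> = (\<Sum>c=1..m. card {x\<in>F. x a = c})"
    using fin by (intro card_UN_disjoint) auto
  finally show ?thesis .
qed

lemma slice_props:
  assumes "F \<subseteq> cubeI m (insert a I)" "a \<notin> I"
  shows "(\<lambda>x. x(a := undefined)) ` {x\<in>F. x a = c} \<subseteq> cubeI m I"
    and "card ((\<lambda>x. x(a := undefined)) ` {x\<in>F. x a = c}) = card {x\<in>F. x a = c}"
proof -
  show "(\<lambda>x. x(a := undefined)) ` {x\<in>F. x a = c} \<subseteq> cubeI m I"
    using assms unfolding cubeI_def by (auto simp: PiE_iff extensional_def)
  have "inj_on (\<lambda>x. x(a := undefined)) {x\<in>F. x a = c}"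
    unfolding inj_on_def fun_eq_iff by (metis (mono_tags, lifting) fun_upd_apply mem_Collect_eq)
  then show "card ((\<lambda>x. x(a := undefined)) ` {x\<in>F. x a = c}) = card {x\<in>F. x a = c}"
    by (rule card_image)
qed

lemma cross_bound:
  assumes "finite I" "m \<ge> 3"
  shows "F \<subseteq> cubeI m I \<Longrightarrow> G \<subseteq> cubeI m I \<Longrightarrow> xint I F G \<Longrightarrow>
    card F / real m ^ card I + card G / real m ^ card I
      + 3 * (card F / real m ^ card I) * (card G / real m ^ card I) \<le> 1"
  using assms(1)
proof (induction I arbitrary: F G rule: finite_induct)
  case empty
  have F1: "card F \<le> 1" using card_mono[OF _ empty.prems(1)] unfolding cubeI_def by simp
  have G1: "card G \<le> 1" using card_mono[OF _ empty.prems(2)] unfolding cubeI_def by simp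
  have "F = {} \<or> G = {}" using empty.prems(3) unfolding xint_def by auto
  then show ?case using F1 G1 by auto
next
  case (insert a I)
  define r where "r = (\<lambda>x::nat\<Rightarrow>nat. x(a := undefined))"
  define Fc where "Fc c = r ` {x\<in>F. x a = c}" for c
  define Gc where "Gc c = r ` {x\<in>G. x a = c}" for c
  define N where "N = real m ^ card I"
  have N0: "N > 0" using assms(2) unfolding N_def by simp
  define f where "f c = card (Fc c) / N" for c
  define g where "g c = card (Gc c) / N" for c
  have Fsub: "Fc c \<subseteq> cubeI m I" and Fcard: "card (Fc c) = card {x\<in>F. x a = c}" for c
    using slice_props[OF insert.prems(1) insert.hyps(2)] unfolding Fc_def r_def by auto
  have Gsub: "Gc c \<subseteq> cubeI m I" and Gcard: "card (Gc c) = card {x\<in>G. x a = c}" for c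
    using slice_props[OF insert.prems(2) insert.hyps(2)] unfolding Gc_def r_def by auto
  have xi: "xint I (Fc c) (Gc d)" if "c \<noteq> d" for c d
  proof -
    { fix x y assume x: "x \<in> F" "x a = c" and y: "y \<in> G" "y a = d"
      then obtain k where "k \<in> insert a I" "x k = y k" using insert.prems(3) unfolding xint_def by blast
      then have "\<exists>k\<in>I. r x k = r y k" using x y that unfolding r_def by auto }
    then show ?thesis unfolding xint_def Fc_def Gc_def by blast
  qed
  have cons: "\<forall>c\<in>{1..m}. \<forall>d\<in>{1..m}. c \<noteq> d \<longrightarrow> f c + g d + 3 * f c * g d \<le> 1"
    using insert.IH[OF Fsub Gsub xi] unfolding f_def g_def N_def by blast
  have f0: "\<forall>c\<in>{1..m}. 0 \<le> f c" and g0: "\<forall>c\<in>{1..m}. 0 \<le> g c"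
    unfolding f_def g_def using N0 by auto
  have SF: "card F / real m ^ card (insert a I) = (\<Sum>c=1..m. f c) / m"
  proof -
    have "card F = (\<Sum>c=1..m. card (Fc c))"
      using card_fibers[OF insert.prems(1) insert.hyps(1)] Fcard by simp
    then have "real (card F) = (\<Sum>c=1..m. real (card (Fc c)))" by simp
    moreover have "real m ^ card (insert a I) = m * N"
      using insert.hyps unfolding N_def by simp
    ultimately show ?thesis unfolding f_def using N0 assms(2)
      by (simp add: sum_divide_distrib[symmetric] field_simps)
  qed
  have SG: "card G / real m ^ card (insert a I) = (\<Sum>c=1..m. g c) / m"
  proof -
    have "card G = (\<Sum>c=1..m. card (Gc c))"
      using card_fibers[OF insert.prems(2) insert.hyps(1)] Gcard by simp
    then have "real (card G) = (\<Sum>c=1..m. real (card (Gc c)))" by simp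
    moreover have "real m ^ card (insert a I) = m * N"
      using insert.hyps unfolding N_def by simp
    ultimately show ?thesis unfolding g_def using N0 assms(2)
      by (simp add: sum_divide_distrib[symmetric] field_simps)
  qed
  show ?case unfolding SF SG
    by (rule step_ineq[OF assms(2) f0 g0 cons poly_ineq])
qed




lemma Tpt_cube:
  assumes "x \<in> cube m n" "i \<in> {1..n}" "m \<ge> 1"
  shows "Tpt i j x \<in> cube m n"
  using assms unfolding cube_def Tpt_def by (auto simp: PiE_iff extensional_def)

lemma Tfam_cube:
  assumes "F \<subseteq> cube m n" "i \<in> {1..n}" "m \<ge> 1"
  shows "Tfam i j F \<subseteq> cube m n"
  using assms Tpt_cube unfolding Tfam_def by blast

lemma shift_inj:
  "F \<subseteq> cube m n \<Longrightarrow> i \<in> {1..n} \<Longrightarrow> m \<ge> 1 \<Longrightarrow> Tupto i k F \<subseteq> dict m n i 1 \<Longrightarrow>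
   (\<forall>x\<in>F. x i = 1 \<or> x i \<le> k) \<and> (\<forall>x\<in>F. \<forall>y\<in>F. x(i:=0) = y(i:=0) \<longrightarrow> x = y)"
proof (induction i k F rule: Tupto.induct)
  case (1 i k F)
  show ?case
  proof (cases "k < 2")
    case True
    then have "F \<subseteq> dict m n i 1" using "1.prems"(4) by simp
    then have F1: "\<forall>x\<in>F. x i = 1" unfolding dict_def by auto
    have "\<forall>x\<in>F. \<forall>y\<in>F. x(i:=0) = y(i:=0) \<longrightarrow> x = y"
    proof (intro ballI impI)
      fix x y assume xy: "x \<in> F" "y \<in> F" "x(i:=0) = y(i:=0)"
      show "x = y"
      proof
        fix j show "x j = y j"
        proof (cases "j = i")
          case True
          have "x i = 1" "y i = 1" using F1 xy(1,2) by blast+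
          then show ?thesis using True by simp
        next
          case False
          have "(x(i:=0)) j = (y(i:=0)) j" using xy(3) by simp
          then show ?thesis using False by simp
        qed
      qed
    qed
    then show ?thesis using F1 by blast
  next
    case False
    define F' where "F' = Tfam i k F"
    have T: "Tupto i (k-1) F' \<subseteq> dict m n i 1" using "1.prems"(4) False unfolding F'_def by simp
    have F'c: "F' \<subseteq> cube m n" unfolding F'_def using Tfam_cube "1.prems" by blast
    have IH: "(\<forall>x\<in>F'. x i = 1 \<or> x i \<le> k-1) \<and> (\<forall>x\<in>F'. \<forall>y\<in>F'. x(i:=0) = y(i:=0) \<longrightarrow> x = y)"
      using "1.IH"[OF False] F'c "1.prems"(2,3) T unfolding F'_def by blast
    have notk: "x(i:=1) \<notin> F" and ink: "x(i:=1) \<in> F'" if "x \<in> F" "x i = k" for x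
    proof -
      have Tx: "Tpt i k x = x(i:=1)" using that unfolding Tpt_def by simp
      show "x(i:=1) \<in> F'" using that Tx unfolding F'_def Tfam_def by (metis UnI2 image_eqI)
      show "x(i:=1) \<notin> F"
      proof
        assume "x(i:=1) \<in> F"
        then have "x \<in> F'" using that Tx unfolding F'_def Tfam_def by auto
        then show False using IH that False by fastforce
      qed
    qed
    have ink2: "x \<in> F'" if "x \<in> F" "x i \<noteq> k" for x
    proof -
      have "Tpt i k x = x" using that unfolding Tpt_def by simp
      then show ?thesis using that unfolding F'_def Tfam_def by auto
    qed
    have P1: "\<forall>x\<in>F. x i = 1 \<or> x i \<le> k"
    proof
      fix x assume "x \<in> F"
      then show "x i = 1 \<or> x i \<le> k" using ink2 IH by (cases "x i = k") force+
    qed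
    have P2: "\<forall>x\<in>F. \<forall>y\<in>F. x(i:=0) = y(i:=0) \<longrightarrow> x = y"
    proof (intro ballI impI)
      fix x y assume xy: "x \<in> F" "y \<in> F" "x(i:=0) = y(i:=0)"
      have same: "x = y" if "x i = y i"
      proof
        fix j show "x j = y j"
        proof (cases "j = i")
          case True then show ?thesis using that by simp
        next
          case False
          have "(x(i:=0)) j = (y(i:=0)) j" using xy(3) by simp
          then show ?thesis using False by simp
        qed
      qed
      consider "x i = k" "y i = k" | "x i \<noteq> k" "y i \<noteq> k" | "x i = k" "y i \<noteq> k" | "x i \<noteq> k" "y i = k"
        by blast
      then show "x = y"
      proof cases
        case 1 then show ?thesis using same by simp
      next
        case 2 then show ?thesis using IH ink2 xy by blast
      next
        case 3
        have "(x(i:=1))(i:=0) = y(i:=0)" using xy(3) by simp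
        then have "x(i:=1) = y" using IH ink[OF xy(1) 3(1)] ink2[OF xy(2) 3(2)] by blast
        then show ?thesis using notk[OF xy(1) 3(1)] xy(2) by simp
      next
        case 4
        have "(y(i:=1))(i:=0) = x(i:=0)" using xy(3) by simp
        then have "y(i:=1) = x" using IH ink[OF xy(2) 4(2)] ink2[OF xy(1) 4(1)] by blast
        then show ?thesis using notk[OF xy(2) 4(2)] xy(1) by simp
      qed
    qed
    show ?thesis using P1 P2 by blast
  qed
qed




lemma main_alg:
  fixes a b :: "nat \<Rightarrow> real" and m :: nat and eps :: real
  assumes eps: "0 < eps" "eps \<le> 1/15"
    and a0: "\<forall>j\<in>{1..m}. 0 \<le> a j" and b0: "\<forall>j\<in>{1..m}. 0 \<le> b j"
    and L: "\<And>S T. S \<subseteq> {1..m} \<Longrightarrow> T \<subseteq> {1..m} \<Longrightarrow> S \<inter> T = {} \<Longrightarrow>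
              sum a S + sum b T + 3 * sum a S * sum b T \<le> 1"
    and s: "sum a {1..m} \<ge> 1 - eps" and t: "sum b {1..m} \<ge> 1 - eps"
  shows "\<exists>j\<in>{1..m}. a j \<ge> 1 - 3*eps \<and> b j \<ge> 1 - 3*eps"
proof -
  define s where "s = sum a {1..m}"
  define t where "t = sum b {1..m}"
  have s1: "s \<le> 1" using L[of "{1..m}" "{}"] unfolding s_def by simp
  have t1: "t \<le> 1" using L[of "{}" "{1..m}"] unfolding t_def by simp
  have sl: "s \<ge> 1 - eps" and tl: "t \<ge> 1 - eps" using s t unfolding s_def t_def by auto
  have star: "sum a S * t + sum b S * s - 2 * sum a S * sum b S \<le> 2*eps/3" if S: "S \<subseteq> {1..m}" for S
  proof -
    define P where "P = sum a S"
    define Q where "Q = sum b S"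
    have ac: "sum a ({1..m} - S) = s - P" unfolding s_def P_def using S
      by (simp add: sum_diff)
    have bc: "sum b ({1..m} - S) = t - Q" unfolding t_def Q_def using S
      by (simp add: sum_diff)
    have 1: "P + (t-Q) + 3*P*(t-Q) \<le> 1" using L[of S "{1..m} - S"] S ac bc unfolding P_def Q_def by auto
    have 2: "(s-P) + Q + 3*(s-P)*Q \<le> 1" using L[of "{1..m} - S" S] S ac bc unfolding P_def Q_def by auto
    have "s + t + 3*(P*t + Q*s - 2*P*Q) \<le> 2" using 1 2 by (simp add: algebra_simps)
    moreover have "\<And>E. s + t + 3*E \<le> 2 \<Longrightarrow> E \<le> 2*eps/3" using sl tl by linarith
    ultimately show ?thesis unfolding P_def Q_def by blast
  qed
  have lower: "sum a S * t + sum b S * s \<ge> (1-eps) * (sum a S + sum b S)" if S: "S \<subseteq> {1..m}" for S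
  proof -
    have P0: "sum a S \<ge> 0" using a0 S by (intro sum_nonneg) auto
    have Q0: "sum b S \<ge> 0" using b0 S by (intro sum_nonneg) auto
    have "sum a S * (1-eps) \<le> sum a S * t" using P0 tl by (intro mult_left_mono) auto
    moreover have "sum b S * (1-eps) \<le> sum b S * s" using Q0 sl by (intro mult_left_mono) auto
    ultimately show ?thesis by (simp add: algebra_simps)
  qed
  have amgm: "4 * (p * q) \<le> (p + q)^2" for p q :: real
  proof -
    have "0 \<le> (p - q)^2" by simp
    then show ?thesis by (simp add: power2_eq_square algebra_simps)
  qed
  have step1: "\<exists>j\<in>{1..m}. a j + b j \<ge> 1"
  proof (rule ccontr)
    assume "\<not> ?thesis"
    then have small: "\<forall>j\<in>{1..m}. a j + b j < 1" by auto
    define w where "w k = sum a {1..k} + sum b {1..k}" for k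
    have mid: "\<not> (1/2 \<le> w k \<and> w k \<le> 3/2)" if "k \<le> m" for k
    proof
      assume wk: "1/2 \<le> w k \<and> w k \<le> 3/2"
      have S: "{1..k} \<subseteq> {1..m}" using that by auto
      have e1: "(1-eps) * w k - 2 * (sum a {1..k} * sum b {1..k}) \<le> 2*eps/3"
        using star[OF S] lower[OF S] unfolding w_def by (simp add: algebra_simps)
      have e2: "4 * (sum a {1..k} * sum b {1..k}) \<le> (w k)^2"
        using amgm unfolding w_def by blast
      have e3: "(1-eps) * w k - (w k)^2/2 \<le> 2*eps/3" using e1 e2 by linarith
      have "(1/2) * (11/60) \<le> w k * (1 - eps - w k/2)"
        using wk eps by (intro mult_mono) auto
      moreover have "w k * (1 - eps - w k/2) = (1-eps) * w k - (w k)^2/2"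
        by (simp add: power2_eq_square algebra_simps)
      ultimately show False using e3 eps by linarith
    qed
    have "k \<le> m \<longrightarrow> w k < 1/2" for k
    proof (induction k)
      case 0 then show ?case unfolding w_def by simp
    next
      case (Suc k)
      show ?case
      proof
        assume km: "Suc k \<le> m"
        then have wk: "w k < 1/2" using Suc by simp
        have "w (Suc k) = w k + (a (Suc k) + b (Suc k))" unfolding w_def by simp
        moreover have "a (Suc k) + b (Suc k) < 1" using small km by simp
        ultimately have "w (Suc k) < 3/2" using wk by linarith
        then show "w (Suc k) < 1/2" using mid[OF km] by linarith
      qed
    qed
    then have "w m < 1/2" by simp
    moreover have "w m = s + t" unfolding w_def s_def t_def by simp
    ultimately show False using sl tl eps by linarith
  qed
  then obtain j where j: "j \<in> {1..m}" "a j + b j \<ge> 1" by blast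
  have Sj: "{j} \<subseteq> {1..m}" using j by auto
  define X where "X = s - a j"
  define Y where "Y = t - b j"
  have X0: "X \<ge> 0" unfolding X_def s_def
  proof -
    have "a j \<le> sum a {1..m}" by (rule member_le_sum) (use j(1) a0 in auto)
    then show "0 \<le> sum a {1..m} - a j" by simp
  qed
  have Y0: "Y \<ge> 0" unfolding Y_def t_def
  proof -
    have "b j \<le> sum b {1..m}" by (rule member_le_sum) (use j(1) b0 in auto)
    then show "0 \<le> sum b {1..m} - b j" by simp
  qed
  define u where "u = X + Y"
  have u1: "u \<le> 1" unfolding u_def X_def Y_def using j s1 t1 by linarith
  have u0: "u \<ge> 0" unfolding u_def using X0 Y0 by simp
  have E: "X * t + Y * s - 2 * X * Y \<le> 2*eps/3"
  proof -
    have "a j * t + b j * s - 2 * a j * b j \<le> 2*eps/3" using star[OF Sj] by simp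
    moreover have "a j * t + b j * s - 2 * a j * b j = X * t + Y * s - 2 * X * Y"
      unfolding X_def Y_def by (simp add: algebra_simps)
    ultimately show ?thesis by simp
  qed
  have E2: "X * t + Y * s \<ge> (1-eps) * u"
  proof -
    have "X * (1-eps) \<le> X * t" using X0 tl by (intro mult_left_mono) auto
    moreover have "Y * (1-eps) \<le> Y * s" using Y0 sl by (intro mult_left_mono) auto
    ultimately show ?thesis unfolding u_def by (simp add: algebra_simps)
  qed
  have E3: "4 * (X * Y) \<le> u" 
  proof -
    have "4 * (X * Y) \<le> u^2" using amgm unfolding u_def by blast
    moreover have "u * u \<le> u * 1" using u0 u1 by (intro mult_left_mono) auto
    then have "u^2 \<le> u * 1" by (simp add: power2_eq_square)
    ultimately show ?thesis by simp
  qed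
  have E4: "u * (1/2 - eps) \<le> 2*eps/3" using E E2 E3 by (simp add: algebra_simps)
  have u2: "u \<le> 2*eps"
  proof (rule ccontr)
    assume "\<not> u \<le> 2*eps"
    then have "2*eps * (1/2 - eps) < u * (1/2 - eps)" using eps by (intro mult_strict_right_mono) auto
    moreover have "2*eps*(1/3) \<le> 2*eps * (1/2 - eps)" using eps by (intro mult_left_mono) auto
    then have "2*eps/3 \<le> 2*eps * (1/2 - eps)" by simp
    ultimately show False using E4 by linarith
  qed
  have "a j \<ge> 1 - 3*eps" using u2 X_def Y0 sl unfolding u_def by linarith
  moreover have "b j \<ge> 1 - 3*eps" using u2 Y_def X0 tl unfolding u_def by linarith
  ultimately show ?thesis using j by blast
qed




lemma fam_facts:
  fixes A :: "(nat \<Rightarrow> nat) set"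
  assumes Ac: "A \<subseteq> cube m n" and i: "i \<in> {1..n}" and m1: "m \<ge> 1"
    and T: "Ti m i A \<subseteq> dict m n i 1"
  defines "N \<equiv> real m ^ (n - 1)"
  shows "\<And>S. S \<subseteq> {1..m} \<Longrightarrow> (\<lambda>x. x(i:=undefined)) ` {x\<in>A. x i \<in> S} \<subseteq> cubeI m ({1..n} - {i})
            \<and> real (card ((\<lambda>x. x(i:=undefined)) ` {x\<in>A. x i \<in> S})) / N
               = sum (\<lambda>j. real (card {x\<in>A. x i = j}) / N) S"
    and "mu m n A = sum (\<lambda>j. real (card {x\<in>A. x i = j}) / N) {1..m} / m"
    and "\<And>j. mu m n (A \<inter> dict m n i j) = (real (card {x\<in>A. x i = j}) / N) / m"
proof -
  have T': "Tupto i m A \<subseteq> dict m n i 1" using T unfolding Ti_def .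
  have "(\<forall>x\<in>A. x i = 1 \<or> x i \<le> m) \<and> (\<forall>x\<in>A. \<forall>y\<in>A. x(i:=0) = y(i:=0) \<longrightarrow> x = y)"
    by (rule shift_inj[OF Ac i m1 T'])
  then have injA: "\<forall>x\<in>A. \<forall>y\<in>A. x(i:=0) = y(i:=0) \<longrightarrow> x = y" by (rule conjunct2)
  have finA: "finite A" using finite_subset[OF Ac] unfolding cube_def by (simp add: finite_PiE)
  have N0: "N > 0" unfolding N_def using m1 by simp
  obtain n' where nS: "n = Suc n'" using i by (cases n) auto
  have mn: "real m ^ n = m * N" unfolding N_def nS by simp
  have cardS: "real (card {x\<in>A. x i \<in> S}) = (\<Sum>j\<in>S. real (card {x\<in>A. x i = j}))" if "finite S" for S
  proof -
    have "{x\<in>A. x i \<in> S} = (\<Union>j\<in>S. {x\<in>A. x i = j})" by auto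
    then have "card {x\<in>A. x i \<in> S} = card (\<Union>j\<in>S. {x\<in>A. x i = j})" by simp
    also have "\<dots> = (\<Sum>j\<in>S. card {x\<in>A. x i = j})"
      using finA that by (intro card_UN_disjoint) auto
    finally show ?thesis by simp
  qed
  show "\<And>S. S \<subseteq> {1..m} \<Longrightarrow> (\<lambda>x. x(i:=undefined)) ` {x\<in>A. x i \<in> S} \<subseteq> cubeI m ({1..n} - {i})
            \<and> real (card ((\<lambda>x. x(i:=undefined)) ` {x\<in>A. x i \<in> S})) / N
               = sum (\<lambda>j. real (card {x\<in>A. x i = j}) / N) S"
  proof
    fix S assume S: "S \<subseteq> {1..m}"
    show "(\<lambda>x. x(i:=undefined)) ` {x\<in>A. x i \<in> S} \<subseteq> cubeI m ({1..n} - {i})"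
    proof
      fix z assume "z \<in> (\<lambda>x. x(i:=undefined)) ` {x\<in>A. x i \<in> S}"
      then obtain x where x: "x \<in> A" "z = x(i:=undefined)" by auto
      have xc: "x \<in> PiE {1..n} (\<lambda>_. {1..m})" using x(1) Ac unfolding cube_def by blast
      have 1: "\<forall>k\<in>{1..n}. x k \<in> {1..m}" using xc by (simp add: PiE_iff)
      have 2: "\<forall>k. k \<notin> {1..n} \<longrightarrow> x k = undefined" using xc by (simp add: PiE_iff extensional_def)
      show "z \<in> cubeI m ({1..n} - {i})" unfolding cubeI_def PiE_iff extensional_def
        using 1 2 x(2) by auto
    qed
    have "inj_on (\<lambda>x. x(i:=undefined)) {x\<in>A. x i \<in> S}"
    proof
      fix x y assume x: "x \<in> {x\<in>A. x i \<in> S}" and y: "y \<in> {x\<in>A. x i \<in> S}"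
        and e: "x(i:=undefined) = y(i:=undefined)"
      have "x(i:=0) = y(i:=0)"
      proof
        fix k show "(x(i:=0)) k = (y(i:=0)) k"
        proof (cases "k = i")
          case False
          have "(x(i:=undefined)) k = (y(i:=undefined)) k" using e by simp
          then show ?thesis using False by simp
        qed simp
      qed
      then show "x = y" using injA x y by blast
    qed
    then have "card ((\<lambda>x. x(i:=undefined)) ` {x\<in>A. x i \<in> S}) = card {x\<in>A. x i \<in> S}"
      by (rule card_image)
    moreover have "finite S" using S finite_subset by blast
    ultimately show "real (card ((\<lambda>x. x(i:=undefined)) ` {x\<in>A. x i \<in> S})) / N
               = sum (\<lambda>j. real (card {x\<in>A. x i = j}) / N) S"
      using cardS by (simp add: sum_divide_distrib)
  qed
  have "A = {x\<in>A. x i \<in> {1..m}}" using Ac i unfolding cube_def by (auto simp: PiE_iff)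
  then have "real (card A) = (\<Sum>j\<in>{1..m}. real (card {x\<in>A. x i = j}))"
    using cardS[of "{1..m}"] by simp
  moreover have "A \<inter> cube m n = A" using Ac by blast
  ultimately show "mu m n A = sum (\<lambda>j. real (card {x\<in>A. x i = j}) / N) {1..m} / m"
    unfolding mu_def mn using N0 m1 by (simp add: sum_divide_distrib[symmetric] field_simps)
  show "mu m n (A \<inter> dict m n i j) = (real (card {x\<in>A. x i = j}) / N) / m" for j
  proof -
    have "A \<inter> dict m n i j \<inter> cube m n = {x\<in>A. x i = j}" using Ac unfolding dict_def by auto
    then show ?thesis unfolding mu_def mn by (simp add: field_simps)
  qed
qed

theorem lemma4p7:
  fixes m n i :: nat and eps :: real and A B :: "(nat \<Rightarrow> nat) set"
  assumes "0 < eps" and "eps \<le> 1/15" and "m \<ge> 3" and "i \<in> {1..n}"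
    and "A \<subseteq> cube m n" and "B \<subseteq> cube m n"
    and "cross_intersecting n A B"
    and "mu m n A \<ge> (1 - eps) * (1 / real m)"
    and "mu m n B \<ge> (1 - eps) * (1 / real m)"
    and "Ti m i A \<subseteq> dict m n i 1" and "Ti m i B \<subseteq> dict m n i 1"
  shows "\<exists>j\<in>{1..m}. mu m n (A \<inter> dict m n i j) \<ge> (1 - 3 * eps) * (1 / real m)
                   \<and> mu m n (B \<inter> dict m n i j) \<ge> (1 - 3 * eps) * (1 / real m)"
proof -
  have m1: "m \<ge> 1" using assms(3) by simp
  define N where "N = real m ^ (n - 1)"
  define I where "I = {1..n} - {i}"
  have finI: "finite I" unfolding I_def by simp
  have cI: "card I = n - 1" unfolding I_def using assms(4) by simp
  define a where "a = (\<lambda>j. real (card {x\<in>A. x i = j}) / N)"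
  define b where "b = (\<lambda>j. real (card {x\<in>B. x i = j}) / N)"
  note FA = fam_facts[OF assms(5,4) m1 assms(10), folded N_def I_def a_def]
  note FB = fam_facts[OF assms(6,4) m1 assms(11), folded N_def I_def b_def]
  have N0: "N > 0" unfolding N_def using m1 by simp
  have a0: "\<forall>j\<in>{1..m}. 0 \<le> a j" unfolding a_def using N0 by simp
  have b0: "\<forall>j\<in>{1..m}. 0 \<le> b j" unfolding b_def using N0 by simp
  have L: "sum a S + sum b T + 3 * sum a S * sum b T \<le> 1"
    if S: "S \<subseteq> {1..m}" and T: "T \<subseteq> {1..m}" and ST: "S \<inter> T = {}" for S T
  proof -
    define AS where "AS = (\<lambda>x. x(i:=undefined)) ` {x\<in>A. x i \<in> S}"
    define BT where "BT = (\<lambda>x. x(i:=undefined)) ` {x\<in>B. x i \<in> T}"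
    have 1: "AS \<subseteq> cubeI m I" "real (card AS) / N = sum a S"
      using FA(1)[OF S] unfolding AS_def a_def by auto
    have 2: "BT \<subseteq> cubeI m I" "real (card BT) / N = sum b T"
      using FB(1)[OF T] unfolding BT_def b_def by auto
    have xi: "xint I AS BT"
      unfolding xint_def
    proof (intro ballI)
      fix x' y' assume "x' \<in> AS" "y' \<in> BT"
      then obtain x y where x: "x \<in> A" "x i \<in> S" "x' = x(i:=undefined)"
        and y: "y \<in> B" "y i \<in> T" "y' = y(i:=undefined)" unfolding AS_def BT_def by auto
      obtain k where k: "k \<in> {1..n}" "x k = y k" using assms(7) x y unfolding cross_intersecting_def by blast
      have "k \<noteq> i" using k x y ST by auto
      then show "\<exists>k\<in>I. x' k = y' k" using k x y unfolding I_def by auto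
    qed
    have X: "real (card AS) / N + real (card BT) / N + 3 * (real (card AS) / N) * (real (card BT) / N) \<le> 1"
      unfolding N_def using cross_bound[OF finI assms(3) 1(1) 2(1) xi] by (simp only: cI)
    show ?thesis using X unfolding 1(2) 2(2) .
  qed
  have s: "sum a {1..m} \<ge> 1 - eps"
  proof -
    have "(1 - eps) / real m \<le> sum a {1..m} / m" using assms(8) FA(2) unfolding a_def by simp
    moreover have "real m > 0" using m1 by simp
    ultimately show ?thesis by (simp add: divide_le_cancel)
  qed
  have t: "sum b {1..m} \<ge> 1 - eps"
  proof -
    have "(1 - eps) / real m \<le> sum b {1..m} / m" using assms(9) FB(2) unfolding b_def by simp
    moreover have "real m > 0" using m1 by simp
    ultimately show ?thesis by (simp add: divide_le_cancel)
  qed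
  obtain j where j: "j \<in> {1..m}" "a j \<ge> 1 - 3*eps" "b j \<ge> 1 - 3*eps"
    using main_alg[OF assms(1,2) a0 b0 L s t] by blast
  have "(1 - 3 * eps) * (1 / real m) \<le> mu m n (A \<inter> dict m n i j)"
    using FA(3)[of j] j(2) m1 unfolding a_def by (simp add: field_simps divide_right_mono)
  moreover have "(1 - 3 * eps) * (1 / real m) \<le> mu m n (B \<inter> dict m n i j)"
    using FB(3)[of j] j(3) m1 unfolding b_def by (simp add: field_simps divide_right_mono)
  ultimately show ?thesis using j(1) by blast
qed


end
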